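(* For every topological space $X$, the simplicial set $S_*^M(X)$ is a Kan complex.
   Context: A continuous multivalued map $X\to Y$ is a subset $T\subset X\times Y$ such that the restriction of the projection $X\times Y\to X$ to $T$ is proper (universally closed), surjective and has finite fibers; $M(X,Y)$ is the set of these. For a continuous map $f:A\to B$ and $\alpha\in M(B,X)$, set $\alpha\circ\mathrm{gr}(f)=\{(a,x)\in A\times X:(f(a),x)\in\alpha\}\in M(A,X)$. Let $\Delta_n=\{(t_0,\dots,t_n)\in\mathbb{R}^{n+1}:t_i\ge 0,\sum t_i=1\}$ with the standard coface maps $\delta^n_i:\Delta_{n-1}\to\Delta_n$ (inserting $0$ in position $i$) and codegeneracy maps $\sigma^n_i:\Delta_{n+1}\to\Delta_n$ (adding coordinates $i$ and $i+1$). $S_*^M(X)$ is the simplicial set with $S_n^M(X)=M(\Delta_n,X)$, face maps $\alpha\mapsto\alpha\circ\mathrm{gr}(\delta^n_i)$ and degeneracy maps $\alpha\mapsto\alpha\circ\mathrm{gr}(\sigma^n_i)$. *)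

theory Defs
  imports "HOL-Analysis.Analysis" "HOL-Homology.Homology"
begin

definition mv_maps :: "'a topology \<Rightarrow> 'b topology \<Rightarrow> ('a \<times> 'b) set set" where
  "mv_maps X Y =
     {T. T \<subseteq> topspace X \<times> topspace Y
        \<and> proper_map (subtopology (prod_topology X Y) T) X fst
        \<and> fst ` T = topspace X
        \<and> (\<forall>x\<in>topspace X. finite {y. (x, y) \<in> T})}"

definition mv_comp_graph :: "'c topology \<Rightarrow> ('c \<Rightarrow> 'a) \<Rightarrow> ('a \<times> 'b) set \<Rightarrow> ('c \<times> 'b) set" where
  "mv_comp_graph A f \<alpha> = {(a, x). a \<in> topspace A \<and> (f a, x) \<in> \<alpha>}"

definition simplex_top :: "nat \<Rightarrow> (nat \<Rightarrow> real) topology" where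
  "simplex_top n = subtopology (powertop_real UNIV) (standard_simplex n)"

text \<open>Codegeneracy sigma_i : Delta_(n+1) to Delta_n, adding coordinates i and i+1.
  (Coface delta_i is the library's simplical_face i, inserting 0 at position i.)\<close>
definition codegeneracy :: "nat \<Rightarrow> (nat \<Rightarrow> real) \<Rightarrow> nat \<Rightarrow> real" where
  "codegeneracy i t = (\<lambda>j. if j < i then t j else if j = i then t i + t (Suc i) else t (Suc j))"

definition SM :: "'a topology \<Rightarrow> nat \<Rightarrow> ((nat \<Rightarrow> real) \<times> 'a) set set" where
  "SM X n = mv_maps (simplex_top n) X"

definition SM_face :: "nat \<Rightarrow> nat \<Rightarrow> ((nat \<Rightarrow> real) \<times> 'a) set \<Rightarrow> ((nat \<Rightarrow> real) \<times> 'a) set" where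
  "SM_face n i \<alpha> = mv_comp_graph (simplex_top (n - 1)) (simplical_face i) \<alpha>"

definition SM_degen :: "nat \<Rightarrow> nat \<Rightarrow> ((nat \<Rightarrow> real) \<times> 'a) set \<Rightarrow> ((nat \<Rightarrow> real) \<times> 'a) set" where
  "SM_degen n i \<alpha> = mv_comp_graph (simplex_top (Suc n)) (codegeneracy i) \<alpha>"

definition simplicial_set ::
  "(nat \<Rightarrow> 's set) \<Rightarrow> (nat \<Rightarrow> nat \<Rightarrow> 's \<Rightarrow> 's) \<Rightarrow> (nat \<Rightarrow> nat \<Rightarrow> 's \<Rightarrow> 's) \<Rightarrow> bool" where
  "simplicial_set S d s \<longleftrightarrow>
     (\<forall>n i. 1 \<le> n \<and> i \<le> n \<longrightarrow> (\<forall>x\<in>S n. d n i x \<in> S (n - 1)))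
   \<and> (\<forall>n i. i \<le> n \<longrightarrow> (\<forall>x\<in>S n. s n i x \<in> S (Suc n)))
   \<and> (\<forall>n i j. 2 \<le> n \<and> i < j \<and> j \<le> n \<longrightarrow>
        (\<forall>x\<in>S n. d (n - 1) i (d n j x) = d (n - 1) (j - 1) (d n i x)))
   \<and> (\<forall>n i j. i < j \<and> j \<le> n \<longrightarrow>
        (\<forall>x\<in>S n. d (Suc n) i (s n j x) = s (n - 1) (j - 1) (d n i x)))
   \<and> (\<forall>n j. j \<le> n \<longrightarrow>
        (\<forall>x\<in>S n. d (Suc n) j (s n j x) = x \<and> d (Suc n) (Suc j) (s n j x) = x))
   \<and> (\<forall>n i j. Suc j < i \<and> i \<le> Suc n \<longrightarrow>
        (\<forall>x\<in>S n. d (Suc n) i (s n j x) = s (n - 1) j (d n (i - 1) x)))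
   \<and> (\<forall>n i j. i \<le> j \<and> j \<le> n \<longrightarrow>
        (\<forall>x\<in>S n. s (Suc n) i (s n j x) = s (Suc n) (Suc j) (s n i x)))"

definition kan_complex ::
  "(nat \<Rightarrow> 's set) \<Rightarrow> (nat \<Rightarrow> nat \<Rightarrow> 's \<Rightarrow> 's) \<Rightarrow> (nat \<Rightarrow> nat \<Rightarrow> 's \<Rightarrow> 's) \<Rightarrow> bool" where
  "kan_complex S d s \<longleftrightarrow> simplicial_set S d s \<and>
     (\<forall>n k (x :: nat \<Rightarrow> 's). 1 \<le> n \<and> k \<le> n
        \<and> (\<forall>i. i \<le> n \<and> i \<noteq> k \<longrightarrow> x i \<in> S (n - 1))
        \<and> (\<forall>i j. i < j \<and> j \<le> n \<and> i \<noteq> k \<and> j \<noteq> k \<longrightarrow>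
              d (n - 1) i (x j) = d (n - 1) (j - 1) (x i))
        \<longrightarrow> (\<exists>y\<in>S n. \<forall>i. i \<le> n \<and> i \<noteq> k \<longrightarrow> d n i y = x i))"

end

theory Submission
  imports Defs
begin


lemma topspace_simplex_top [simp]: "topspace (simplex_top n) = standard_simplex n"
  by (simp add: simplex_top_def)

lemma compact_space_simplex_top: "compact_space (simplex_top n)"
  by (simp add: simplex_top_def compact_space_subtopology compactin_standard_simplex)

lemma Hausdorff_simplex_top: "Hausdorff_space (simplex_top n)"
  unfolding simplex_top_def
  by (intro Hausdorff_space_subtopology) (simp add: Hausdorff_space_product_topology)

lemma mv_maps_simplex:
  "T \<in> mv_maps (simplex_top n) X \<longleftrightarrow>
     T \<subseteq> standard_simplex n \<times> topspace X \<and> compactin (prod_topology (simplex_top n) X) T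
     \<and> fst ` T = standard_simplex n \<and> (\<forall>x\<in>standard_simplex n. finite {y. (x,y) \<in> T})"
proof -
  let ?S = "simplex_top n" and ?P = "prod_topology (simplex_top n) X"
  have "proper_map (subtopology ?P T) ?S fst \<longleftrightarrow> compactin ?P T"
    if T: "T \<subseteq> standard_simplex n \<times> topspace X" "fst ` T = standard_simplex n"
  proof
    have tT: "topspace (subtopology ?P T) = T" using T by auto
    assume "proper_map (subtopology ?P T) ?S fst"
    then have "compact_space (subtopology ?P T)"
      by (rule compact_space_proper_map_preimage) (use tT T compact_space_simplex_top in auto)
    then show "compactin ?P T"
      using tT by (metis compact_space_def compactin_subtopology)
  next
    assume "compactin ?P T"
    then show "proper_map (subtopology ?P T) ?S fst"
      by (intro continuous_imp_proper_map compact_space_subtopology Hausdorff_imp_kc_space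
           Hausdorff_simplex_top continuous_map_from_subtopology continuous_map_fst)
  qed
  then show ?thesis
    unfolding mv_maps_def by auto
qed

lemma pullback_compact:
  assumes f: "continuous_map (simplex_top m) (simplex_top n) f"
    and T: "compactin (prod_topology (simplex_top n) X) T"
  shows "compactin (prod_topology (simplex_top m) X) (mv_comp_graph (simplex_top m) f T)"
proof -
  let ?A = "simplex_top m" and ?B = "simplex_top n"
  let ?Q = "prod_topology ?A (prod_topology ?B X)"
  let ?K = "standard_simplex m \<times> T"
  define W where "W = {p \<in> ?K. f (fst p) = fst (snd p)}"
  have TT: "T \<subseteq> standard_simplex n \<times> topspace X"
    using T compactin_subset_topspace by fastforce
  have cK: "compactin ?Q ?K"
    using compactin_Times T compact_space_simplex_top
    by (metis compact_space_def topspace_simplex_top)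
  have tK: "topspace (subtopology ?Q ?K) = ?K" using TT by auto
  have cs: "compact_space (subtopology ?Q ?K)"
    using cK by (rule compact_space_subtopology)
  have contg: "continuous_map (subtopology ?Q ?K) (prod_topology ?B ?B) (\<lambda>p. (f (fst p), fst (snd p)))"
  proof (intro continuous_map_pairedI continuous_map_from_subtopology)
    show "continuous_map ?Q ?B (\<lambda>p. f (fst p))"
      using continuous_map_compose[OF continuous_map_fst f] by (simp add: o_def)
    show "continuous_map ?Q ?B (\<lambda>p. fst (snd p))"
      using continuous_map_compose[OF continuous_map_snd continuous_map_fst[of ?B X]] by (simp add: o_def)
  qed
  have "closedin (subtopology ?Q ?K) {p \<in> topspace (subtopology ?Q ?K). (f (fst p), fst (snd p)) \<in> (\<lambda>x. (x,x)) ` topspace ?B}"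
    using closedin_continuous_map_preimage[OF contg] Hausdorff_simplex_top Hausdorff_space_closedin_diagonal
    by blast
  moreover have "{p \<in> topspace (subtopology ?Q ?K). (f (fst p), fst (snd p)) \<in> (\<lambda>x. (x,x)) ` topspace ?B} = W"
    using tK TT by (auto simp: W_def)
  ultimately have "compactin (subtopology ?Q ?K) W"
    using cs closedin_compact_space by metis
  then have cW: "compactin ?Q W"
    by (simp add: compactin_subtopology)
  have "continuous_map ?Q (prod_topology ?A X) (\<lambda>p. (fst p, snd (snd p)))"
  proof (intro continuous_map_pairedI)
    show "continuous_map ?Q ?A fst" by (rule continuous_map_fst)
    show "continuous_map ?Q X (\<lambda>p. snd (snd p))"
      using continuous_map_compose[OF continuous_map_snd continuous_map_snd[of ?B X]] by (simp add: o_def)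
  qed
  then have "compactin (prod_topology ?A X) ((\<lambda>p. (fst p, snd (snd p))) ` W)"
    using cW image_compactin by blast
  moreover have "(\<lambda>p. (fst p, snd (snd p))) ` W = mv_comp_graph ?A f T"
    by (force simp: W_def mv_comp_graph_def)
  ultimately show ?thesis by simp
qed



lemma face_face: "i < j \<Longrightarrow> simplical_face j (simplical_face i c) = simplical_face i (simplical_face (j - 1) c)"
  by (rule ext) (auto simp: simplical_face_def)

lemma face_inj: "simplical_face i b = simplical_face i b' \<Longrightarrow> b = b'"
proof (rule ext)
  fix j assume "simplical_face i b = simplical_face i b'"
  then have "simplical_face i b (if j < i then j else Suc j) = simplical_face i b' (if j < i then j else Suc j)" by simp
  then show "b j = b' j" by (auto simp: simplical_face_def split: if_splits)
qed

lemma cod_face_same: "codegeneracy j (simplical_face j a) = a"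
  by (rule ext) (auto simp: simplical_face_def codegeneracy_def)

lemma cod_face_Suc: "codegeneracy j (simplical_face (Suc j) a) = a"
  by (rule ext) (auto simp: simplical_face_def codegeneracy_def)

lemma cod_face_less: "i < j \<Longrightarrow> codegeneracy j (simplical_face i a) = simplical_face i (codegeneracy (j - 1) a)"
  by (rule ext) (auto simp: simplical_face_def codegeneracy_def)

lemma cod_face_greater: "Suc j < i \<Longrightarrow> codegeneracy j (simplical_face i a) = simplical_face (i - 1) (codegeneracy j a)"
  by (rule ext) (auto simp: simplical_face_def codegeneracy_def)

lemma cod_cod: "i \<le> j \<Longrightarrow> codegeneracy j (codegeneracy i a) = codegeneracy i (codegeneracy (Suc j) a)"
  by (rule ext) (auto simp: codegeneracy_def)

lemma face_cod_zero: "a i = 0 \<Longrightarrow> simplical_face i (codegeneracy i a) = a"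
  by (rule ext) (auto simp: simplical_face_def codegeneracy_def)

lemma cod_sum:
  assumes "i \<le> n"
  shows "(\<Sum>j\<le>n. codegeneracy i t j) = (\<Sum>j\<le>Suc n. t j)"
  using assms
proof (induction n rule: dec_induct)
  case base
  have "(\<Sum>j\<le>i. codegeneracy i t j) = (\<Sum>j<i. codegeneracy i t j) + codegeneracy i t i"
    by (simp add: lessThan_Suc_atMost[symmetric])
  also have "(\<Sum>j<i. codegeneracy i t j) = (\<Sum>j<i. t j)"
    by (rule sum.cong) (auto simp: codegeneracy_def)
  finally show ?case
    by (simp add: lessThan_Suc_atMost[symmetric] codegeneracy_def)
next
  case (step m)
  then show ?case by (simp add: codegeneracy_def)
qed

lemma cod_in_simplex:
  assumes "i \<le> n" "t \<in> standard_simplex (Suc n)"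
  shows "codegeneracy i t \<in> standard_simplex n"
proof -
  have t: "\<And>j. 0 \<le> t j" "\<And>j. t j \<le> 1" "\<And>j. j > Suc n \<Longrightarrow> t j = 0" "(\<Sum>j\<le>Suc n. t j) = 1"
    using assms by (auto simp: standard_simplex_def)
  have s: "(\<Sum>j\<le>n. codegeneracy i t j) = 1" using cod_sum[OF assms(1)] t by simp
  have nn: "\<And>j. 0 \<le> codegeneracy i t j" using t by (simp add: codegeneracy_def)
  have le: "codegeneracy i t j \<le> 1" for j
  proof (cases "j \<le> n")
    case True
    then have "codegeneracy i t j \<le> (\<Sum>j\<le>n. codegeneracy i t j)"
      by (intro member_le_sum) (auto simp: nn)
    then show ?thesis using s by simp
  next
    case False then show ?thesis using t assms(1) by (simp add: codegeneracy_def)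
  qed
  have "\<And>j. j > n \<Longrightarrow> codegeneracy i t j = 0" using t assms(1) by (simp add: codegeneracy_def)
  then show ?thesis using nn le s by (simp add: standard_simplex_def)
qed

lemma face_cont:
  assumes "1 \<le> n" "k \<le> n"
  shows "continuous_map (simplex_top (n - 1)) (simplex_top n) (simplical_face k)"
  unfolding simplex_top_def continuous_map_in_subtopology
proof (intro conjI)
  show "simplical_face k \<in> topspace (subtopology (powertop_real UNIV) (standard_simplex (n - 1))) \<rightarrow> standard_simplex n"
    using assms simplical_face_in_standard_simplex by auto
  show "continuous_map (subtopology (powertop_real UNIV) (standard_simplex (n - 1))) (powertop_real UNIV) (simplical_face k)"
    unfolding continuous_map_componentwise_UNIV
  proof
    fix i
    have "continuous_map (powertop_real UNIV) euclideanreal (\<lambda>x. if i < k then x i else if i = k then 0 else x (i -1))"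
      by (auto intro: continuous_map_product_projection)
    then show "continuous_map (subtopology (powertop_real UNIV) (standard_simplex (n - 1))) euclideanreal
                              (\<lambda>x. simplical_face k x i)"
      by (simp add: simplical_face_def continuous_map_from_subtopology)
  qed
qed

lemma cod_cont:
  assumes "i \<le> n"
  shows "continuous_map (simplex_top (Suc n)) (simplex_top n) (codegeneracy i)"
  unfolding simplex_top_def continuous_map_in_subtopology
proof (intro conjI)
  show "codegeneracy i \<in> topspace (subtopology (powertop_real UNIV) (standard_simplex (Suc n))) \<rightarrow> standard_simplex n"
    using assms cod_in_simplex by auto
  show "continuous_map (subtopology (powertop_real UNIV) (standard_simplex (Suc n))) (powertop_real UNIV) (codegeneracy i)"
    unfolding continuous_map_componentwise_UNIV
  proof
    fix j
    have "continuous_map (powertop_real UNIV) euclideanreal (\<lambda>t. if j < i then t j else if j = i then t i + t (Suc i) else t (Suc j))"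
      by (auto intro!: continuous_map_product_projection continuous_map_add)
    then show "continuous_map (subtopology (powertop_real UNIV) (standard_simplex (Suc n))) euclideanreal
                              (\<lambda>x. codegeneracy i x j)"
      by (simp add: codegeneracy_def continuous_map_from_subtopology)
  qed
qed

lemma pullback_mv:
  assumes a: "\<alpha> \<in> mv_maps (simplex_top n) X"
    and f: "continuous_map (simplex_top m) (simplex_top n) f"
  shows "mv_comp_graph (simplex_top m) f \<alpha> \<in> mv_maps (simplex_top m) X"
proof -
  have fim: "\<And>a. a \<in> standard_simplex m \<Longrightarrow> f a \<in> standard_simplex n"
    using f continuous_map_image_subset_topspace by fastforce
  have A: "\<alpha> \<subseteq> standard_simplex n \<times> topspace X" "compactin (prod_topology (simplex_top n) X) \<alpha>"
     "fst ` \<alpha> = standard_simplex n" "\<forall>x\<in>standard_simplex n. finite {y. (x,y) \<in> \<alpha>}"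
    using a mv_maps_simplex by blast+
  let ?G = "mv_comp_graph (simplex_top m) f \<alpha>"
  have "?G \<subseteq> standard_simplex m \<times> topspace X"
    using A(1) by (auto simp: mv_comp_graph_def)
  moreover have "compactin (prod_topology (simplex_top m) X) ?G"
    by (rule pullback_compact[OF f A(2)])
  moreover have "fst ` ?G = standard_simplex m"
  proof
    show "fst ` ?G \<subseteq> standard_simplex m" by (auto simp: mv_comp_graph_def)
    show "standard_simplex m \<subseteq> fst ` ?G"
    proof
      fix a assume "a \<in> standard_simplex m"
      then have "f a \<in> fst ` \<alpha>" using fim A(3) by auto
      then obtain x where "(f a, x) \<in> \<alpha>" by force
      then show "a \<in> fst ` ?G" using \<open>a \<in> standard_simplex m\<close>
        by (force simp: mv_comp_graph_def)
    qed
  qed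
  moreover have "\<forall>a\<in>standard_simplex m. finite {y. (a,y) \<in> ?G}"
  proof
    fix a assume "a \<in> standard_simplex m"
    then have "{y. (a,y) \<in> ?G} = {y. (f a, y) \<in> \<alpha>}" by (auto simp: mv_comp_graph_def)
    then show "finite {y. (a,y) \<in> ?G}" using A(4) fim \<open>a \<in> standard_simplex m\<close> by simp
  qed
  ultimately show ?thesis using mv_maps_simplex by blast
qed

lemma comp_graph_comp:
  assumes "\<And>a. a \<in> topspace A \<Longrightarrow> f a \<in> topspace B"
  shows "mv_comp_graph A f (mv_comp_graph B g \<alpha>) = mv_comp_graph A (g \<circ> f) \<alpha>"
  using assms by (auto simp: mv_comp_graph_def)

lemma comp_graph_cong:
  assumes "\<And>a. a \<in> topspace A \<Longrightarrow> f a = g a"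
  shows "mv_comp_graph A f \<alpha> = mv_comp_graph A g \<alpha>"
  using assms by (auto simp: mv_comp_graph_def)

lemma comp_graph_id:
  assumes "\<alpha> \<subseteq> topspace A \<times> UNIV"
  shows "mv_comp_graph A (\<lambda>x. x) \<alpha> = \<alpha>"
  using assms by (auto simp: mv_comp_graph_def)



lemma SM_sub: "x \<in> SM X n \<Longrightarrow> x \<subseteq> topspace (simplex_top n) \<times> UNIV"
  unfolding SM_def using mv_maps_simplex by fastforce

lemma face_in: "1 \<le> n \<Longrightarrow> k \<le> n \<Longrightarrow> a \<in> topspace (simplex_top (n - 1)) \<Longrightarrow> simplical_face k a \<in> topspace (simplex_top n)"
  using simplical_face_in_standard_simplex by auto

lemma face_in': "k \<le> Suc n \<Longrightarrow> a \<in> topspace (simplex_top n) \<Longrightarrow> simplical_face k a \<in> topspace (simplex_top (Suc n))"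
  using face_in[of "Suc n" k a] by simp

lemma cod_in: "i \<le> n \<Longrightarrow> a \<in> topspace (simplex_top (Suc n)) \<Longrightarrow> codegeneracy i a \<in> topspace (simplex_top n)"
  using cod_in_simplex by auto

lemma cod_in': "i \<le> n - 1 \<Longrightarrow> 1 \<le> n \<Longrightarrow> a \<in> topspace (simplex_top n) \<Longrightarrow> codegeneracy i a \<in> topspace (simplex_top (n - 1))"
  using cod_in[of i "n - 1" a] by simp

lemma SM_simplicial: "simplicial_set (SM X) SM_face SM_degen"
  unfolding simplicial_set_def
proof (intro conjI allI impI ballI)
  fix n i x assume "1 \<le> n \<and> i \<le> n" "x \<in> SM X n"
  then show "SM_face n i x \<in> SM X (n - 1)"
    unfolding SM_def SM_face_def using pullback_mv face_cont by blast
next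
  fix n i x assume "i \<le> n" "x \<in> SM X n"
  then show "SM_degen n i x \<in> SM X (Suc n)"
    unfolding SM_def SM_degen_def using pullback_mv cod_cont by blast
next
  fix n i j x assume h: "2 \<le> n \<and> i < j \<and> j \<le> n" "x \<in> SM X n"
  have "SM_face (n - 1) i (SM_face n j x) = mv_comp_graph (simplex_top (n - 1 - 1)) (simplical_face j \<circ> simplical_face i) x"
    unfolding SM_face_def using h by (intro comp_graph_comp face_in) auto
  also have "\<dots> = mv_comp_graph (simplex_top (n - 1 - 1)) (simplical_face i \<circ> simplical_face (j - 1)) x"
    using h by (intro comp_graph_cong) (simp add: face_face)
  also have "\<dots> = SM_face (n - 1) (j - 1) (SM_face n i x)"
    unfolding SM_face_def using h by (intro comp_graph_comp[symmetric] face_in) auto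
  finally show "SM_face (n - 1) i (SM_face n j x) = SM_face (n - 1) (j - 1) (SM_face n i x)" .
next
  fix n i j x assume h: "i < j \<and> j \<le> n" "x \<in> SM X n"
  have "SM_face (Suc n) i (SM_degen n j x) = mv_comp_graph (simplex_top n) (codegeneracy j \<circ> simplical_face i) x"
    unfolding SM_face_def SM_degen_def diff_Suc_1 using h by (intro comp_graph_comp face_in') auto
  also have "\<dots> = mv_comp_graph (simplex_top n) (simplical_face i \<circ> codegeneracy (j - 1)) x"
    using h by (intro comp_graph_cong) (simp add: cod_face_less)
  also have "\<dots> = SM_degen (n - 1) (j - 1) (SM_face n i x)"
  proof -
    have e: "Suc (n - 1) = n" using h by auto
    show ?thesis unfolding SM_face_def SM_degen_def e using h by (intro comp_graph_comp[symmetric] cod_in') auto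
  qed
  finally show "SM_face (Suc n) i (SM_degen n j x) = SM_degen (n - 1) (j - 1) (SM_face n i x)" .
next
  fix n j x assume h: "j \<le> n" "x \<in> SM X n"
  have "SM_face (Suc n) j (SM_degen n j x) = mv_comp_graph (simplex_top n) (codegeneracy j \<circ> simplical_face j) x"
    unfolding SM_face_def SM_degen_def diff_Suc_1 using h by (intro comp_graph_comp face_in') auto
  also have "\<dots> = mv_comp_graph (simplex_top n) (\<lambda>x. x) x"
    by (intro comp_graph_cong) (simp add: cod_face_same)
  also have "\<dots> = x" using SM_sub[OF h(2)] by (rule comp_graph_id)
  finally show "SM_face (Suc n) j (SM_degen n j x) = x" .
  have "SM_face (Suc n) (Suc j) (SM_degen n j x) = mv_comp_graph (simplex_top n) (codegeneracy j \<circ> simplical_face (Suc j)) x"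
    unfolding SM_face_def SM_degen_def diff_Suc_1 using h by (intro comp_graph_comp face_in') auto
  also have "\<dots> = mv_comp_graph (simplex_top n) (\<lambda>x. x) x"
    by (intro comp_graph_cong) (simp add: cod_face_Suc)
  also have "\<dots> = x" using SM_sub[OF h(2)] by (rule comp_graph_id)
  finally show "SM_face (Suc n) (Suc j) (SM_degen n j x) = x" .
next
  fix n i j x assume h: "Suc j < i \<and> i \<le> Suc n" "x \<in> SM X n"
  have "SM_face (Suc n) i (SM_degen n j x) = mv_comp_graph (simplex_top n) (codegeneracy j \<circ> simplical_face i) x"
    unfolding SM_face_def SM_degen_def diff_Suc_1 using h by (intro comp_graph_comp face_in') auto
  also have "\<dots> = mv_comp_graph (simplex_top n) (simplical_face (i - 1) \<circ> codegeneracy j) x"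
    using h by (intro comp_graph_cong) (simp add: cod_face_greater)
  also have "\<dots> = SM_degen (n - 1) j (SM_face n (i - 1) x)"
  proof -
    have e: "Suc (n - 1) = n" using h by auto
    show ?thesis unfolding SM_face_def SM_degen_def e using h by (intro comp_graph_comp[symmetric] cod_in') auto
  qed
  finally show "SM_face (Suc n) i (SM_degen n j x) = SM_degen (n - 1) j (SM_face n (i - 1) x)" .
next
  fix n i j x assume h: "i \<le> j \<and> j \<le> n" "x \<in> SM X n"
  have "SM_degen (Suc n) i (SM_degen n j x) = mv_comp_graph (simplex_top (Suc (Suc n))) (codegeneracy j \<circ> codegeneracy i) x"
    unfolding SM_degen_def using h by (intro comp_graph_comp cod_in) auto
  also have "\<dots> = mv_comp_graph (simplex_top (Suc (Suc n))) (codegeneracy i \<circ> codegeneracy (Suc j)) x"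
    using h by (intro comp_graph_cong) (simp add: cod_cod)
  also have "\<dots> = SM_degen (Suc n) (Suc j) (SM_degen n i x)"
    unfolding SM_degen_def using h by (intro comp_graph_comp[symmetric] cod_in) auto
  finally show "SM_degen (Suc n) i (SM_degen n j x) = SM_degen (Suc n) (Suc j) (SM_degen n i x)" .
qed



lemma zero_coord_face:
  assumes t: "t \<in> standard_simplex m" and i: "i \<le> m" and ti: "t i = 0"
  shows "1 \<le> m \<and> codegeneracy i t \<in> standard_simplex (m - 1) \<and> t = simplical_face i (codegeneracy i t)"
proof -
  have tt: "\<And>j. 0 \<le> t j" "\<And>j. t j \<le> 1" "\<And>j. j > m \<Longrightarrow> t j = 0" "(\<Sum>j\<le>m. t j) = 1"
    using t by (auto simp: standard_simplex_def)
  have m1: "1 \<le> m"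
  proof (rule ccontr)
    assume "\<not> 1 \<le> m" then have "m = 0" by simp
    then show False using tt(4) ti i by simp
  qed
  then obtain p where p: "m = Suc p" using not0_implies_Suc by fastforce
  have "codegeneracy i t \<in> standard_simplex p"
  proof (cases "i \<le> p")
    case True then show ?thesis using cod_in_simplex t p by blast
  next
    case False
    then have im: "i = m" using i p by simp
    have "(\<Sum>j\<le>p. codegeneracy i t j) = (\<Sum>j\<le>p. t j)"
      by (rule sum.cong) (use im p in \<open>auto simp: codegeneracy_def\<close>)
    also have "\<dots> = 1" using tt(4) ti im p by simp
    finally have s: "(\<Sum>j\<le>p. codegeneracy i t j) = 1" .
    show ?thesis using tt im p ti s by (auto simp: standard_simplex_def codegeneracy_def)
  qed
  then show ?thesis using m1 p face_cod_zero[of t i] ti by simp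
qed

definition hm :: "nat \<Rightarrow> nat \<Rightarrow> (nat \<Rightarrow> real) \<Rightarrow> real" where
  "hm n k t = Min ((\<lambda>i. t i) ` ({..n} - {k}))"

definition rr :: "nat \<Rightarrow> nat \<Rightarrow> (nat \<Rightarrow> real) \<Rightarrow> nat \<Rightarrow> real" where
  "rr n k t = (\<lambda>i. if i \<le> n then (if i = k then t i + real n * hm n k t else t i - hm n k t) else t i)"

lemma I_ne: "1 \<le> (n::nat) \<Longrightarrow> {..n} - {k} \<noteq> {}"
proof
  assume "1 \<le> n" "{..n} - {k} = {}"
  then have "0 \<in> {k}" "1 \<in> {k}" by auto
  then show False by simp
qed

lemma I_card: "k \<le> n \<Longrightarrow> card ({..n} - {k}) = n"
  by (simp add: card_Diff_singleton)

lemma hm_le: "i \<le> n \<Longrightarrow> i \<noteq> k \<Longrightarrow> hm n k t \<le> t i"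
  unfolding hm_def by (rule Min_le) auto

lemma hm_att: "1 \<le> n \<Longrightarrow> \<exists>i. i \<le> n \<and> i \<noteq> k \<and> t i = hm n k t"
proof -
  assume "1 \<le> n"
  then have "hm n k t \<in> (\<lambda>i. t i) ` ({..n} - {k})"
    unfolding hm_def by (intro Min_in) (auto simp: I_ne)
  then show ?thesis by auto
qed

lemma hm_nonneg: "1 \<le> n \<Longrightarrow> t \<in> standard_simplex n \<Longrightarrow> 0 \<le> hm n k t"
proof -
  assume a: "1 \<le> n" "t \<in> standard_simplex n"
  then obtain i where "t i = hm n k t" using hm_att[of n k t] by blast
  moreover have "0 \<le> t i" using a by (simp add: standard_simplex_def)
  ultimately show ?thesis by simp
qed

lemma rr_in:
  assumes n: "1 \<le> n" "k \<le> n" and t: "t \<in> standard_simplex n"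
  shows "rr n k t \<in> standard_simplex n"
proof -
  let ?h = "hm n k t"
  have tt: "\<And>j. 0 \<le> t j" "\<And>j. t j \<le> 1" "\<And>j. j > n \<Longrightarrow> t j = 0" "(\<Sum>j\<le>n. t j) = 1"
    using t by (auto simp: standard_simplex_def)
  have h0: "0 \<le> ?h" using hm_nonneg n t by blast
  have eq: "rr n k t j = t j - ?h + (if j = k then (real n + 1) * ?h else 0)" if "j \<le> n" for j
    using that by (simp add: rr_def algebra_simps)
  have "(\<Sum>j\<le>n. rr n k t j) = (\<Sum>j\<le>n. t j - ?h + (if j = k then (real n + 1) * ?h else 0))"
    by (rule sum.cong) (auto simp: eq)
  also have "\<dots> = 1"
    using n tt(4) by (simp add: sum.distrib sum_subtractf)
  finally have s: "(\<Sum>j\<le>n. rr n k t j) = 1" .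
  have nn: "0 \<le> rr n k t j" for j
    using hm_le[of j n k t] tt h0 by (auto simp: rr_def)
  have le1: "rr n k t j \<le> 1" for j
  proof (cases "j \<le> n")
    case True
    then have "rr n k t j \<le> (\<Sum>j\<le>n. rr n k t j)"
      by (intro member_le_sum) (auto simp: nn)
    then show ?thesis using s by simp
  next
    case False then show ?thesis using tt by (simp add: rr_def)
  qed
  show ?thesis using s nn le1 tt(3) by (auto simp: standard_simplex_def rr_def)
qed

lemma rr_zero: "1 \<le> n \<Longrightarrow> \<exists>i. i \<le> n \<and> i \<noteq> k \<and> rr n k t i = 0"
  using hm_att[of n k t] by (auto simp: rr_def)

lemma rr_fix:
  assumes "1 \<le> n" "t \<in> standard_simplex n" "i \<le> n" "i \<noteq> k" "t i = 0"
  shows "rr n k t = t"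
proof -
  have "hm n k t = 0" using hm_le[of i n k t] hm_nonneg[of n t k] assms by simp
  then show ?thesis by (auto simp: rr_def)
qed

lemma Min_cont:
  assumes "finite I" "I \<noteq> {}" "\<And>i. i \<in> I \<Longrightarrow> continuous_map X euclideanreal (g i)"
  shows "continuous_map X euclideanreal (\<lambda>x. Min ((\<lambda>i. g i x) ` I))"
  using assms
proof (induction I rule: finite_ne_induct)
  case (singleton a) then show ?case by simp
next
  case (insert a F)
  have "(\<lambda>x. Min ((\<lambda>i. g i x) ` insert a F)) = (\<lambda>x. min (g a x) (Min ((\<lambda>i. g i x) ` F)))"
    using insert.hyps by (simp add: Min_insert)
  then show ?case using insert by (simp add: continuous_map_real_min)
qed

lemma rr_cont:
  assumes n: "1 \<le> n" "k \<le> n"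
  shows "continuous_map (simplex_top n) (simplex_top n) (rr n k)"
  unfolding simplex_top_def continuous_map_in_subtopology
proof (intro conjI)
  show "rr n k \<in> topspace (subtopology (powertop_real UNIV) (standard_simplex n)) \<rightarrow> standard_simplex n"
    using rr_in n by auto
  have hc: "continuous_map (powertop_real UNIV) euclideanreal (hm n k)"
    unfolding hm_def
    by (rule Min_cont) (use I_ne[OF n(1), of k] in \<open>auto intro: continuous_map_product_projection\<close>)
  show "continuous_map (subtopology (powertop_real UNIV) (standard_simplex n)) (powertop_real UNIV) (rr n k)"
    unfolding continuous_map_componentwise_UNIV
  proof
    fix j
    have "continuous_map (powertop_real UNIV) euclideanreal (\<lambda>t. if j \<le> n then (if j = k then t j + real n * hm n k t else t j - hm n k t) else t j)"
      using hc by (auto intro!: continuous_map_product_projection continuous_map_add continuous_map_diff continuous_map_real_mult_left)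
    then show "continuous_map (subtopology (powertop_real UNIV) (standard_simplex n)) euclideanreal (\<lambda>x. rr n k x j)"
      by (simp add: rr_def continuous_map_from_subtopology)
  qed
qed



lemma SM_kan_fill:
  assumes n: "1 \<le> n" "k \<le> n"
    and xs: "\<forall>i. i \<le> n \<and> i \<noteq> k \<longrightarrow> x i \<in> SM X (n - 1)"
    and cp: "\<forall>i j. i < j \<and> j \<le> n \<and> i \<noteq> k \<and> j \<noteq> k \<longrightarrow>
              SM_face (n - 1) i (x j) = SM_face (n - 1) (j - 1) (x i)"
  shows "\<exists>y\<in>SM X n. \<forall>i. i \<le> n \<and> i \<noteq> k \<longrightarrow> SM_face n i y = x i"
proof -
  define I where "I = {i. i \<le> n \<and> i \<noteq> k}"
  have xI: "x i \<subseteq> standard_simplex (n - 1) \<times> topspace X"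
    "compactin (prod_topology (simplex_top (n - 1)) X) (x i)"
    "fst ` x i = standard_simplex (n - 1)"
    "\<forall>b\<in>standard_simplex (n - 1). finite {z. (b,z) \<in> x i}" if "i \<in> I" for i
    using xs that unfolding I_def SM_def mv_maps_simplex by blast+
  define G where "G = (\<Union>i\<in>I. (\<lambda>p. (simplical_face i (fst p), snd p)) ` x i)"
  define y where "y = mv_comp_graph (simplex_top n) (rr n k) G"
  have memG: "(a, z) \<in> G \<longleftrightarrow> (\<exists>i\<in>I. \<exists>b. a = simplical_face i b \<and> (b, z) \<in> x i)" for a z
    unfolding G_def by force
  have CL: "(b, z) \<in> x j \<longleftrightarrow> (b', z) \<in> x i"
    if ij: "i < j" "i \<in> I" "j \<in> I" and bb: "b \<in> standard_simplex (n - 1)" "b' \<in> standard_simplex (n - 1)"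
      and eq: "simplical_face j b = simplical_face i b'" for i j b b' z
  proof -
    have "b i = simplical_face j b i" using ij by (simp add: simplical_face_def)
    also have "\<dots> = 0" using eq by (simp add: simplical_face_def)
    finally have bi: "b i = 0" .
    have iL: "i \<le> n - 1" using ij unfolding I_def by auto
    define c where "c = codegeneracy i b"
    have c: "c \<in> standard_simplex (n - 1 - 1)" "b = simplical_face i c"
      using zero_coord_face[OF bb(1) iL bi] unfolding c_def by auto
    have "simplical_face i b' = simplical_face i (simplical_face (j - 1) c)"
      using eq c(2) face_face[OF ij(1), of c] by simp
    then have b': "b' = simplical_face (j - 1) c" by (rule face_inj)
    have "SM_face (n - 1) i (x j) = SM_face (n - 1) (j - 1) (x i)"
      using cp ij unfolding I_def by auto
    then have "(c, z) \<in> SM_face (n - 1) i (x j) \<longleftrightarrow> (c, z) \<in> SM_face (n - 1) (j - 1) (x i)" by simp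
    then show ?thesis using c b' by (simp add: SM_face_def mv_comp_graph_def)
  qed
  have faces: "SM_face n i y = x i" if i: "i \<in> I" for i
  proof -
    have iI: "i \<le> n" "i \<noteq> k" using i unfolding I_def by auto
    have "SM_face n i y = mv_comp_graph (simplex_top (n - 1)) (rr n k \<circ> simplical_face i) G"
      unfolding SM_face_def y_def using n iI by (intro comp_graph_comp face_in) auto
    also have "\<dots> = mv_comp_graph (simplex_top (n - 1)) (simplical_face i) G"
    proof (rule comp_graph_cong)
      fix a assume "a \<in> topspace (simplex_top (n - 1))"
      then have "simplical_face i a \<in> standard_simplex n" using face_in n iI by auto
      then show "(rr n k \<circ> simplical_face i) a = simplical_face i a"
        using rr_fix[OF n(1) _ iI] by (simp add: simplical_face_def)
    qed
    also have "\<dots> = x i"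
    proof (rule equalityI[OF subsetI subsetI])
      fix p assume "p \<in> mv_comp_graph (simplex_top (n - 1)) (simplical_face i) G"
      then obtain b z where p: "p = (b, z)" and b: "b \<in> standard_simplex (n - 1)"
        and "(simplical_face i b, z) \<in> G"
        by (auto simp: mv_comp_graph_def)
      then obtain j b' where j: "j \<in> I" and e: "simplical_face i b = simplical_face j b'" and bz: "(b', z) \<in> x j"
        by (auto simp: memG)
      have b': "b' \<in> standard_simplex (n - 1)" using xI(1)[OF j] bz by auto
      consider "j = i" | "j < i" | "i < j" by linarith
      then show "p \<in> x i"
      proof cases
        case 1 then show ?thesis using e bz p face_inj by blast
      next
        case 2 then show ?thesis using CL[OF 2 j i b b' e] bz p by simp
      next
        case 3 then show ?thesis using CL[OF 3 i j b' b e[symmetric]] bz p by simp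
      qed
    next
      fix p assume "p \<in> x i"
      moreover obtain b z where p: "p = (b, z)" by force
      ultimately show "p \<in> mv_comp_graph (simplex_top (n - 1)) (simplical_face i) G"
        using xI(1)[OF i] i by (auto simp: mv_comp_graph_def memG)
    qed
    finally show ?thesis .
  qed
  have GX: "G \<subseteq> standard_simplex n \<times> topspace X"
  proof
    fix p assume "p \<in> G"
    then obtain i q where i: "i \<in> I" and q: "q \<in> x i" and p: "p = (simplical_face i (fst q), snd q)"
      unfolding G_def by blast
    then show "p \<in> standard_simplex n \<times> topspace X"
      using xI(1)[OF i] face_in[OF n(1), of i "fst q"] unfolding I_def by auto
  qed
  have cG: "compactin (prod_topology (simplex_top n) X) G"
    unfolding G_def
  proof (rule compactin_Union)
    show "finite ((\<lambda>i. (\<lambda>p. (simplical_face i (fst p), snd p)) ` x i) ` I)"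
      unfolding I_def by simp
    fix S assume "S \<in> (\<lambda>i. (\<lambda>p. (simplical_face i (fst p), snd p)) ` x i) ` I"
    then obtain i where i: "i \<in> I" and S: "S = (\<lambda>p. (simplical_face i (fst p), snd p)) ` x i" by blast
    have "continuous_map (prod_topology (simplex_top (n - 1)) X) (prod_topology (simplex_top n) X)
             (\<lambda>p. (simplical_face i (fst p), snd p))"
    proof (intro continuous_map_pairedI continuous_map_snd)
      show "continuous_map (prod_topology (simplex_top (n - 1)) X) (simplex_top n) (\<lambda>p. simplical_face i (fst p))"
        using continuous_map_compose[OF continuous_map_fst face_cont[OF n(1), of i]] i
        unfolding I_def by (simp add: o_def)
    qed
    then show "compactin (prod_topology (simplex_top n) X) S"
      using image_compactin xI(2)[OF i] S by blast
  qed
  have "y \<in> SM X n"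
    unfolding SM_def mv_maps_simplex
  proof (intro conjI ballI)
    show "y \<subseteq> standard_simplex n \<times> topspace X"
      using GX by (auto simp: y_def mv_comp_graph_def)
    show "compactin (prod_topology (simplex_top n) X) y"
      unfolding y_def by (rule pullback_compact[OF rr_cont[OF n] cG])
    show "fst ` y = standard_simplex n"
    proof
      show "fst ` y \<subseteq> standard_simplex n" by (auto simp: y_def mv_comp_graph_def)
      show "standard_simplex n \<subseteq> fst ` y"
      proof
        fix a assume a: "a \<in> standard_simplex n"
        then have ra: "rr n k a \<in> standard_simplex n" using rr_in n by blast
        obtain i where i: "i \<le> n" "i \<noteq> k" "rr n k a i = 0" using rr_zero[OF n(1)] by blast
        then have iI: "i \<in> I" unfolding I_def by simp
        define c where "c = codegeneracy i (rr n k a)"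
        have c: "c \<in> standard_simplex (n - 1)" "rr n k a = simplical_face i c"
          using zero_coord_face[OF ra i(1) i(3)] unfolding c_def by auto
        then have "c \<in> fst ` x i" using xI(3)[OF iI] by simp
        then obtain z where "(c, z) \<in> x i" by force
        then have "(rr n k a, z) \<in> G" using c iI memG by blast
        then have "(a, z) \<in> y" using a by (simp add: y_def mv_comp_graph_def)
        then show "a \<in> fst ` y" by force
      qed
    qed
    fix a assume a: "a \<in> standard_simplex n"
    have sub: "{z. (a, z) \<in> y} \<subseteq> (\<Union>i\<in>I. {z. (codegeneracy i (rr n k a), z) \<in> x i})"
    proof
      fix z assume "z \<in> {z. (a, z) \<in> y}"
      then have "(rr n k a, z) \<in> G" by (simp add: y_def mv_comp_graph_def)
      then obtain i b where "i \<in> I" "rr n k a = simplical_face i b" "(b, z) \<in> x i"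
        by (auto simp: memG)
      then show "z \<in> (\<Union>i\<in>I. {z. (codegeneracy i (rr n k a), z) \<in> x i})"
        using cod_face_same[of i b] by (metis (mono_tags, lifting) UN_iff mem_Collect_eq)
    qed
    have "finite {z. (c, z) \<in> x i}" if i: "i \<in> I" for i c
    proof (cases "c \<in> standard_simplex (n - 1)")
      case True then show ?thesis using xI(4)[OF i] by blast
    next
      case False
      then have "{z. (c, z) \<in> x i} = {}" using xI(1)[OF i] by auto
      then show ?thesis by simp
    qed
    moreover have "finite I" unfolding I_def by simp
    ultimately show "finite {z. (a, z) \<in> y}"
      using sub by (meson finite_UN_I finite_subset)
  qed
  then show ?thesis using faces unfolding I_def by blast
qed

theorem mainTheorem8:
  fixes X :: "'a topology"
  shows "kan_complex (SM X) SM_face SM_degen"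
  unfolding kan_complex_def
proof (intro conjI SM_simplicial allI impI)
  fix n k x assume "1 \<le> n \<and> k \<le> n \<and> (\<forall>i. i \<le> n \<and> i \<noteq> k \<longrightarrow> x i \<in> SM X (n - 1)) \<and> (\<forall>i j. i < j \<and> j \<le> n \<and> i \<noteq> k \<and> j \<noteq> k \<longrightarrow> SM_face (n - 1) i (x j) = SM_face (n - 1) (j - 1) (x i))"
  then show "\<exists>y\<in>SM X n. \<forall>i. i \<le> n \<and> i \<noteq> k \<longrightarrow> SM_face n i y = x i"
    using SM_kan_fill[of n k x X] by blast
qed


end
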